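(* Let $k\ge 1$ and $P\subseteq\{0,1\}^k$. If $P\subseteq\operatorname{Ham}_k(\{0,k\})$, then $O_{\operatorname{Maj}}(P)=P$. Otherwise, if $P=\operatorname{Ham}_k(S)$ for some $S\subseteq\{0,\dots,k\}$ with $S\setminus\{0,k\}$ nonempty, then $O_{\operatorname{Maj}}(P)=\operatorname{Ham}_k\big(\{0,\dots,k\}\cap\{2\min S-k+1,\dots,2\max S-1\}\big)$.
   Context: $\operatorname{Ham}_k(S)=\{x\in\{0,1\}^k:|x|\in S\}$ with $|x|$ the Hamming weight. For odd $L$, $\operatorname{Maj}_L(x)=1$ iff $\sum_{i=1}^Lx_i>L/2$. For $f:\{0,1\}^L\to\{0,1\}$ and $P\subseteq\{0,1\}^k$, $O_f(P)=\{x\in\{0,1\}^k:\exists x^{(1)},\dots,x^{(L)}\in P\text{ with }x_i=f(x^{(1)}_i,\dots,x^{(L)}_i)\ \forall i\in[k]\}$. $O_{\operatorname{Maj}}(P)=\bigcup_{L\text{ odd}}O_{\operatorname{Maj}_L}(P)$. *)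

theory Defs
  imports Main
begin

text \<open>Points of the Boolean cube {0,1}^k are bool lists of length k (True = 1).\<close>

definition cube :: "nat \<Rightarrow> bool list set" where
  "cube k = {x. length x = k}"

definition hweight :: "bool list \<Rightarrow> nat" where
  "hweight x = count_list x True"

definition Ham :: "nat \<Rightarrow> nat set \<Rightarrow> bool list set" where
  "Ham k S = {x \<in> cube k. hweight x \<in> S}"

definition Maj :: "bool list \<Rightarrow> bool" where
  "Maj ys = (2 * count_list ys True > length ys)"

text \<open>O_f(P) for f of arity L, applied coordinatewise to L (not necessarily distinct) points of P.\<close>
definition Ofun :: "nat \<Rightarrow> (bool list \<Rightarrow> bool) \<Rightarrow> nat \<Rightarrow> bool list set \<Rightarrow> bool list set" where
  "Ofun L f k P = {x \<in> cube k. \<exists>xs. length xs = L \<and> set xs \<subseteq> P \<and>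
      (\<forall>i<k. x ! i = f (map (\<lambda>y. y ! i) xs))}"

definition OMaj :: "nat \<Rightarrow> bool list set \<Rightarrow> bool list set" where
  "OMaj k P = (\<Union>L\<in>{L. odd L}. Ofun L Maj k P)"

end

theory Submission imports Defs "HOL-Combinatorics.Permutations" begin

definition row :: "nat \<Rightarrow> nat \<Rightarrow> nat \<Rightarrow> nat \<Rightarrow> nat \<Rightarrow> bool" where
  "row c n h j p = (p < c \<or> (c \<le> p \<and> p < c + n \<and> (p - c + j) mod n < h))"

definition pt :: "nat \<Rightarrow> (nat \<Rightarrow> bool) \<Rightarrow> bool list" where
  "pt k f = map f [0..<k]"

lemma count_map_upt: "count_list (map f [0..<n]) True = card {j. j < n \<and> f j}"
proof (induction n)
  case 0 then show ?case by simp
next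
  case (Suc n)
  have "{j. j < Suc n \<and> f j} = {j. j < n \<and> f j} \<union> (if f n then {n} else {})" by (auto simp: less_Suc_eq)
  then show ?case using Suc by (auto simp: card_insert_if)
qed

lemma nth_pt: "i < k \<Longrightarrow> pt k f ! i = f i" by (simp add: pt_def)
lemma pt_cube: "pt k f \<in> cube k" by (simp add: pt_def cube_def)
lemma hweight_pt: "hweight (pt k f) = card {i. i < k \<and> f i}"
  by (simp add: hweight_def pt_def count_map_upt)
lemma pt_Ham: "pt k f \<in> Ham k S \<longleftrightarrow> card {i. i < k \<and> f i} \<in> S"
  by (simp add: Ham_def pt_cube hweight_pt)

lemma build:
  assumes "odd (a+b)" "\<And>j. j<a \<Longrightarrow> pt k (G j) \<in> P" "\<And>j. j<b \<Longrightarrow> pt k (H j) \<in> P"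
    "\<And>i. i<k \<Longrightarrow> g i = (a+b < 2*(card{j. j<a \<and> G j i} + card{j. j<b \<and> H j i}))"
  shows "pt k g \<in> OMaj k P"
proof -
  define xs where "xs = map (\<lambda>j. pt k (G j)) [0..<a] @ map (\<lambda>j. pt k (H j)) [0..<b]"
  have "length xs = a + b" by (simp add: xs_def)
  moreover have "set xs \<subseteq> P" using assms(2,3) by (auto simp: xs_def)
  moreover have "\<forall>i<k. pt k g ! i = Maj (map (\<lambda>y. y ! i) xs)"
  proof (intro allI impI)
    fix i assume i: "i < k"
    have "map (\<lambda>y. y ! i) xs = map (\<lambda>j. G j i) [0..<a] @ map (\<lambda>j. H j i) [0..<b]"
      using i by (simp add: xs_def nth_pt)
    then show "pt k g ! i = Maj (map (\<lambda>y. y ! i) xs)"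
      using i assms(4)[OF i] by (simp add: Maj_def nth_pt count_map_upt)
  qed
  ultimately have "pt k g \<in> Ofun (a+b) Maj k P" by (auto simp: Ofun_def pt_cube)
  then show ?thesis using assms(1) unfolding OMaj_def by blast
qed

lemma cyc:
  assumes "h \<le> n"
  shows "card {j. j < n \<and> (q + j) mod n < h} = h"
proof (cases "n = 0")
  case True then show ?thesis using assms by simp
next
  case False
  define f where "f = (\<lambda>j. (q + j) mod n)"
  have inj: "inj_on f {..<n}"
  proof (rule inj_onI)
    fix x y assume "x \<in> {..<n}" "y \<in> {..<n}" "f x = f y"
    then obtain q1 q2 where "q + x + n * q1 = q + y + n * q2" unfolding f_def nat_mod_eq_iff by blast
    then have "x + n * q1 = y + n * q2" by simp
    then have "x mod n = y mod n" unfolding nat_mod_eq_iff by blast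
    then show "x = y" using \<open>x \<in> {..<n}\<close> \<open>y \<in> {..<n}\<close> by simp
  qed
  have sub: "f ` {..<n} \<subseteq> {..<n}" using False by (auto simp: f_def)
  have surj: "f ` {..<n} = {..<n}"
    using inj sub by (simp add: endo_inj_surj)
  have "f ` {j. j < n \<and> f j < h} = {..<h}"
  proof
    show "f ` {j. j < n \<and> f j < h} \<subseteq> {..<h}" by auto
    show "{..<h} \<subseteq> f ` {j. j < n \<and> f j < h}"
    proof
      fix r assume "r \<in> {..<h}"
      then have "r \<in> f ` {..<n}" using surj assms by auto
      then obtain j where "j < n" "f j = r" by auto
      then show "r \<in> f ` {j. j < n \<and> f j < h}" using \<open>r \<in> {..<h}\<close> by auto
    qed
  qed
  moreover have "inj_on f {j. j < n \<and> f j < h}" by (rule inj_on_subset[OF inj]) auto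
  ultimately have "card {j. j < n \<and> f j < h} = h" using card_image by fastforce
  then show ?thesis by (simp add: f_def)
qed

lemma count_const: "card {j. j < a \<and> p < (c::nat)} = (if p < c then a else 0)"
  by simp

lemma count_row:
  assumes "h \<le> n"
  shows "card {j. j < n \<and> row c n h j p} = (if p < c then n else if p < c + n then h else 0)"
proof -
  consider "p < c" | "c \<le> p" "p < c + n" | "c + n \<le> p" by linarith
  then show ?thesis
  proof cases
    case 1 then show ?thesis by (simp add: row_def)
  next
    case 2
    then have "{j. j < n \<and> row c n h j p} = {j. j < n \<and> (p - c + j) mod n < h}"
      by (auto simp: row_def)
    moreover have "card {j. j < n \<and> (p - c + j) mod n < h} = h" by (rule cyc[OF assms])
    ultimately show ?thesis using 2 by simp
  next
    case 3 then show ?thesis by (simp add: row_def)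
  qed
qed

lemma weight_row:
  assumes "c + n \<le> k" "h \<le> n"
  shows "card {p. p < k \<and> row c n h j p} = c + h"
proof -
  have eq: "{p. p < k \<and> row c n h j p} = {..<c} \<union> (\<lambda>q. c + q) ` {q. q < n \<and> (j + q) mod n < h}"
  proof
    show "{p. p < k \<and> row c n h j p} \<subseteq> {..<c} \<union> (\<lambda>q. c + q) ` {q. q < n \<and> (j + q) mod n < h}"
    proof
      fix p assume "p \<in> {p. p < k \<and> row c n h j p}"
      then have "p < c \<or> (c \<le> p \<and> p < c + n \<and> (p - c + j) mod n < h)" by (simp add: row_def)
      then show "p \<in> {..<c} \<union> (\<lambda>q. c + q) ` {q. q < n \<and> (j + q) mod n < h}"
      proof
        assume "c \<le> p \<and> p < c + n \<and> (p - c + j) mod n < h"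
        then have "p = c + (p - c)" "p - c < n" "(j + (p - c)) mod n < h" by (auto simp: add.commute)
        then show ?thesis by blast
      qed simp
    qed
    show "{..<c} \<union> (\<lambda>q. c + q) ` {q. q < n \<and> (j + q) mod n < h} \<subseteq> {p. p < k \<and> row c n h j p}"
      using assms by (auto simp: row_def add.commute)
  qed
  have "card ((\<lambda>q. c + q) ` {q. q < n \<and> (j + q) mod n < h}) = h"
    using cyc[OF assms(2)] by (simp add: card_image)
  moreover have "{..<c} \<inter> (\<lambda>q. c + q) ` {q. q < n \<and> (j + q) mod n < h} = {}" by auto
  ultimately show ?thesis unfolding eq by (simp add: card_Un_disjoint)
qed

lemma pt_row_Ham: "c + n \<le> k \<Longrightarrow> h \<le> n \<Longrightarrow> c + h \<in> S \<Longrightarrow> pt k (row c n h j) \<in> Ham k S"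
  by (simp add: pt_Ham weight_row)

lemma pt_pre_Ham: "r \<le> k \<Longrightarrow> r \<in> S \<Longrightarrow> pt k (\<lambda>p. p < r) \<in> Ham k S"
proof -
  assume "r \<le> k" "r \<in> S"
  moreover have "{i. i < k \<and> i < r} = {..<r}" using \<open>r \<le> k\<close> by auto
  ultimately show ?thesis by (simp add: pt_Ham)
qed

lemma gadget_cyc:
  assumes "c + n \<le> k" "odd n" "h \<le> n" "c + h \<in> S"
  shows "pt k (\<lambda>p. p < (if n < 2*h then c+n else c)) \<in> OMaj k (Ham k S)"
proof (rule build[where a=0 and b=n and H="\<lambda>j. row c n h j" and G="\<lambda>j p. False"])
  show "odd (0+n)" using assms by simp
  show "\<And>j. j < n \<Longrightarrow> pt k (row c n h j) \<in> Ham k S" using assms pt_row_Ham by blast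
  fix i assume "i < k"
  show "(i < (if n < 2*h then c+n else c)) = (0 + n < 2 * (card {j. j < 0 \<and> False} + card {j. j < n \<and> row c n h j i}))"
    using assms odd_pos[OF assms(2)] by (simp add: count_row[OF assms(3)])
qed simp

lemma mix1:
  assumes "1 \<le> r1" "r1 \<le> w" "w \<le> r2" "r2 \<le> k" "r1 \<in> S" "r2 \<in> S"
  shows "pt k (\<lambda>p. p < w) \<in> OMaj k (Ham k S)"
proof (rule build[where a="w-1" and b=w and H="\<lambda>j. row 0 w r1 j" and G="\<lambda>j p. p < r2"])
  show "odd (w - 1 + w)" using assms by simp
  show "\<And>j. j < w \<Longrightarrow> pt k (row 0 w r1 j) \<in> Ham k S" using assms pt_row_Ham[of 0 w k r1 S] by simp
  show "\<And>j. j < w - 1 \<Longrightarrow> pt k (\<lambda>p. p < r2) \<in> Ham k S" using assms pt_pre_Ham by blast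
  fix i assume "i < k"
  show "(i < w) = (w - 1 + w < 2 * (card {j. j < w - 1 \<and> i < r2} + card {j. j < w \<and> row 0 w r1 j i}))"
    using assms by (simp add: count_row[of r1 w] count_const) arith
qed

lemma mix2:
  assumes "r1 \<le> w" "w \<le> r2" "r2 < k" "r1 \<in> S" "r2 \<in> S"
  shows "pt k (\<lambda>p. p < w) \<in> OMaj k (Ham k S)"
proof (rule build[where a="k-w-1" and b="k-w" and H="\<lambda>j. row w (k-w) (r2-w) j" and G="\<lambda>j p. p < r1"])
  show "odd (k-w-1 + (k-w))" using assms by simp
  show "\<And>j. j < k-w \<Longrightarrow> pt k (row w (k-w) (r2-w) j) \<in> Ham k S" using assms pt_row_Ham[of w "k-w" k "r2-w" S] by simp
  show "\<And>j. j < k-w-1 \<Longrightarrow> pt k (\<lambda>p. p < r1) \<in> Ham k S" using assms pt_pre_Ham by simp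
  fix i assume "i < k"
  show "(i < w) = (k-w-1 + (k-w) < 2 * (card {j. j < k-w-1 \<and> i < r1} + card {j. j < k-w \<and> row w (k-w) (r2-w) j i}))"
    using assms \<open>i < k\<close> by (simp add: count_row[of "r2-w" "k-w"] count_const) arith
qed

lemma cf: "count_list (xs::bool list) False + count_list xs True = length xs"
  by (induction xs) auto

lemma cl_sum: "count_list y v = (\<Sum>i<length y. if y ! i = v then 1 else 0)"
proof (induction y)
  case Nil then show ?case by simp
next
  case (Cons a y)
  show ?case using Cons by (subst length_Cons, subst sum.lessThan_Suc_shift) simp
qed

lemma sum_cols:
  assumes "\<forall>y\<in>set xs. length y = k"
  shows "(\<Sum>i<k. count_list (map (\<lambda>y. y ! i) xs) v) = sum_list (map (\<lambda>y. count_list y v) xs)"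
  using assms
proof (induction xs)
  case Nil then show ?case by simp
next
  case (Cons y xs)
  have "(\<Sum>i<k. count_list (map (\<lambda>y. y ! i) (y # xs)) v)
      = (\<Sum>i<k. (if y ! i = v then 1 else 0) + count_list (map (\<lambda>y. y ! i) xs) v)"
    by (intro sum.cong) auto
  also have "\<dots> = (\<Sum>i<k. if y ! i = v then 1 else 0) + (\<Sum>i<k. count_list (map (\<lambda>y. y ! i) xs) v)"
    by (simp add: sum.distrib)
  also have "\<dots> = count_list y v + sum_list (map (\<lambda>y. count_list y v) xs)"
    using Cons by (simp add: cl_sum)
  finally show ?case by simp
qed

lemma sum_list_bound: "\<forall>y\<in>set xs. f y \<le> (B::nat) \<Longrightarrow> sum_list (map f xs) \<le> length xs * B"
  by (induction xs) auto

lemma maj_count: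
  assumes "odd L" "length ys = L" "Maj ys = v"
  shows "L + 1 \<le> 2 * count_list ys v"
proof (cases v)
  case True then show ?thesis using assms by (simp add: Maj_def)
next
  case False
  have "count_list ys False + count_list ys True = L" using cf assms by simp
  then show ?thesis using assms False by (simp add: Maj_def) presburger
qed

lemma bound:
  assumes "x \<in> Ofun L Maj k P" "odd L" "\<forall>y\<in>P. count_list y v \<le> B" "1 \<le> B" "P \<subseteq> cube k"
  shows "count_list x v < 2 * B"
proof -
  obtain xs where xs: "length xs = L" "set xs \<subseteq> P" "\<forall>i<k. x ! i = Maj (map (\<lambda>y. y ! i) xs)"
    and x: "x \<in> cube k" using assms(1) by (auto simp: Ofun_def)
  have len: "length x = k" using x by (simp add: cube_def)
  have "(L + 1) * count_list x v = (\<Sum>i<k. if x ! i = v then L + 1 else 0)"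
    using len by (simp add: cl_sum sum_distrib_left if_distrib cong: if_cong)
  also have "\<dots> \<le> (\<Sum>i<k. 2 * count_list (map (\<lambda>y. y ! i) xs) v)"
  proof (intro sum_mono)
    fix i assume "i \<in> {..<k}"
    then show "(if x ! i = v then L + 1 else 0) \<le> 2 * count_list (map (\<lambda>y. y ! i) xs) v"
      using maj_count[OF assms(2), of "map (\<lambda>y. y ! i) xs" v] xs by auto
  qed
  also have "\<dots> = 2 * (\<Sum>i<k. count_list (map (\<lambda>y. y ! i) xs) v)" by (simp add: sum_distrib_left)
  also have "\<dots> = 2 * sum_list (map (\<lambda>y. count_list y v) xs)"
  proof -
    have "\<forall>y\<in>set xs. length y = k" using xs(2) assms(5) by (auto simp: cube_def)
    then show ?thesis by (simp add: sum_cols)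
  qed
  also have "\<dots> \<le> 2 * (L * B)" using sum_list_bound[of xs "\<lambda>y. count_list y v" B] xs assms(3) by auto
  finally have *: "(L + 1) * count_list x v \<le> 2 * (L * B)" .
  show ?thesis
  proof (rule ccontr)
    assume "\<not> ?thesis"
    then have "(L + 1) * (2 * B) \<le> (L + 1) * count_list x v"
      by (intro mult_le_mono2) simp
    with * have "(L + 1) * (2 * B) \<le> 2 * (L * B)" by linarith
    then show False using assms(4) by (simp add: algebra_simps)
  qed
qed

lemma hw_mset: "hweight y = count (mset y) True" by (simp add: hweight_def count_mset)

lemma perm_closed:
  assumes "z \<in> OMaj k (Ham k S)" "x \<in> cube k" "hweight x = hweight z"
  shows "x \<in> OMaj k (Ham k S)"
proof -
  obtain L where L: "odd L" "z \<in> Ofun L Maj k (Ham k S)" using assms(1) by (auto simp: OMaj_def)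
  then obtain xs where xs: "length xs = L" "set xs \<subseteq> Ham k S" "\<forall>i<k. z ! i = Maj (map (\<lambda>y. y ! i) xs)"
    and z: "z \<in> cube k" by (auto simp: Ofun_def)
  have lz: "length z = k" and lx: "length x = k" using z assms(2) by (auto simp: cube_def)
  have "mset x = mset z"
  proof (rule multiset_eqI)
    fix b show "count (mset x) b = count (mset z) b"
    proof (cases b)
      case True then show ?thesis using assms(3) by (simp add: hw_mset)
    next
      case False
      have "count_list x False = count_list z False"
        using cf[of x] cf[of z] lx lz assms(3) by (simp add: hweight_def)
      then show ?thesis using False by (simp add: count_mset)
    qed
  qed
  then obtain p where p: "p permutes {..<length z}" "permute_list p z = x" by (rule mset_eq_permutation)
  define ys where "ys = map (permute_list p) xs"
  have "set ys \<subseteq> Ham k S"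
  proof
    fix y' assume "y' \<in> set ys"
    then obtain y where y: "y \<in> set xs" "y' = permute_list p y" by (auto simp: ys_def)
    then have yH: "y \<in> Ham k S" using xs by auto
    then have ly: "length y = k" by (simp add: Ham_def cube_def)
    then have "mset y' = mset y" using y p lz by simp
    then show "y' \<in> Ham k S" using yH ly y by (simp add: Ham_def cube_def hw_mset)
  qed
  moreover have "length ys = L" using xs by (simp add: ys_def)
  moreover have "\<forall>i<k. x ! i = Maj (map (\<lambda>y. y ! i) ys)"
  proof (intro allI impI)
    fix i assume i: "i < k"
    have pi: "p i < k" using permutes_in_image[OF p(1)] i lz by auto
    have "map (\<lambda>y. y ! i) ys = map (\<lambda>y. y ! p i) xs"
    proof -
      have "\<forall>y\<in>set xs. permute_list p y ! i = y ! p i"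
      proof
        fix y assume "y \<in> set xs"
        then have "length y = k" using xs by (auto simp: Ham_def cube_def)
        then show "permute_list p y ! i = y ! p i" using permute_list_nth[of p y i] p lz i by simp
      qed
      then show ?thesis by (simp add: ys_def)
    qed
    moreover have "x ! i = z ! p i" using p permute_list_nth[of p z i] lz i by metis
    ultimately show "x ! i = Maj (map (\<lambda>y. y ! i) ys)" using xs(3) pi by simp
  qed
  ultimately have "x \<in> Ofun L Maj k (Ham k S)" using assms(2) by (auto simp: Ofun_def)
  then show ?thesis using L(1) by (auto simp: OMaj_def)
qed

lemma part1:
  assumes "k \<ge> 1" "P \<subseteq> cube k" "P \<subseteq> Ham k {0, k}"
  shows "OMaj k P = P"
proof
  show "P \<subseteq> OMaj k P"
  proof
    fix x assume x: "x \<in> P"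
    have "x \<in> Ofun 1 Maj k P"
      using x assms(2) unfolding Ofun_def
      by (intro CollectI conjI; (intro exI[of _ "[x]"])?) (auto simp: Maj_def)
    moreover have "odd (1::nat)" by simp
    ultimately show "x \<in> OMaj k P" unfolding OMaj_def by blast
  qed
  show "OMaj k P \<subseteq> P"
  proof
    fix x assume "x \<in> OMaj k P"
    then obtain L where L: "odd L" "x \<in> Ofun L Maj k P" by (auto simp: OMaj_def)
    then obtain xs where xs: "length xs = L" "set xs \<subseteq> P" "\<forall>i<k. x ! i = Maj (map (\<lambda>y. y ! i) xs)"
      and xc: "x \<in> cube k" by (auto simp: Ofun_def)
    define c where "c = (\<lambda>y::bool list. hweight y = k)"
    have const: "\<forall>i<k. y ! i = c y" if "y \<in> P" for y
    proof -
      have ly: "length y = k" and hw: "hweight y = 0 \<or> hweight y = k" using that assms by (auto simp: Ham_def cube_def)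
      show ?thesis
      proof (cases "hweight y = k")
        case True
        then have "count_list y False = 0" using cf[of y] ly by (simp add: hweight_def)
        then have "False \<notin> set y" by (simp add: count_list_0_iff)
        show ?thesis
        proof (intro allI impI)
          fix i assume "i < k"
          then have "y ! i \<in> set y" using ly by simp
          then have "y ! i \<noteq> False" using \<open>False \<notin> set y\<close> by metis
          then show "y ! i = c y" using True by (simp add: c_def)
        qed
      next
        case False
        then have "count_list y True = 0" using hw by (simp add: hweight_def)
        then have "True \<notin> set y" by (simp add: count_list_0_iff)
        show ?thesis
        proof (intro allI impI)
          fix i assume "i < k"
          then have "y ! i \<in> set y" using ly by simp
          then have "y ! i \<noteq> True" using \<open>True \<notin> set y\<close> by metis
          then show "y ! i = c y" using False by (simp add: c_def)
        qed
      qed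
    qed
    define b where "b = Maj (map c xs)"
    have xb: "\<forall>i<k. x ! i = b"
    proof (intro allI impI)
      fix i assume "i < k"
      then have "map (\<lambda>y. y ! i) xs = map c xs" using const xs(2) by (intro map_cong) auto
      then have "x ! i = Maj (map c xs)" using xs(3) \<open>i < k\<close> by metis
      then show "x ! i = b" by (simp add: b_def)
    qed
    have "b \<in> set (map c xs)"
    proof (cases b)
      case True
      then have "count_list (map c xs) True \<noteq> 0" by (auto simp: b_def Maj_def)
      then show ?thesis using True by (simp add: count_list_0_iff)
    next
      case False
      then have "2 * count_list (map c xs) True \<le> L" using xs(1) by (simp add: b_def Maj_def)
      then have "count_list (map c xs) True \<noteq> L" using L(1) by (cases L) auto
      then have "count_list (map c xs) False \<noteq> 0" using cf[of "map c xs"] xs(1) by simp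
      then show ?thesis using False by (auto simp: count_list_0_iff image_iff)
    qed
    then obtain y where y: "y \<in> set xs" "c y = b" by auto
    then have yP: "y \<in> P" using xs by auto
    have "x = y"
    proof (rule nth_equalityI)
      show "length x = length y" using xc yP assms(2) by (auto simp: cube_def)
      fix i assume "i < length x"
      then have "i < k" using xc by (simp add: cube_def)
      then show "x ! i = y ! i" using xb const[OF yP] y by simp
    qed
    then show "x \<in> P" using yP by simp
  qed
qed

lemma pt_pre_OMaj:
  assumes "S \<subseteq> {0..k}" "finite S" "s \<in> S" "0 < s" "s < k"
    "w \<le> k" "2 * int (Min S) - int k + 1 \<le> int w" "int w \<le> 2 * int (Max S) - 1"
  shows "pt k (\<lambda>p. p < w) \<in> OMaj k (Ham k S)"
proof -
  define m where "m = Min S"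
  define M where "M = Max S"
  have ne: "S \<noteq> {}" using assms(3) by auto
  have mS: "m \<in> S" unfolding m_def by (rule Min_in[OF assms(2) ne])
  have MS: "M \<in> S" unfolding M_def by (rule Max_in[OF assms(2) ne])
  have ms: "m \<le> s" and sM: "s \<le> M" using assms(2,3) by (auto simp: m_def M_def)
  have Mk: "M \<le> k" using MS assms(1) by auto
  have lo: "2 * int m - int k + 1 \<le> int w" and hi: "int w \<le> 2 * int M - 1"
    using assms(7,8) by (auto simp: m_def M_def)
  consider "M \<le> w" | "w \<le> m" | "m < w" "w < M" "w \<le> s" | "m < w" "w < M" "s < w" by linarith
  then show ?thesis
  proof cases
    case 1
    define c where "c = 2*M - w - 1"
    define n where "n = 2*(w - M) + 1"
    define h where "h = w - M + 1"
    have e: "(if n < 2*h then c+n else c) = w" using 1 hi by (simp add: c_def n_def h_def)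
    have "pt k (\<lambda>p. p < (if n < 2*h then c+n else c)) \<in> OMaj k (Ham k S)"
      by (rule gadget_cyc) (use 1 hi MS assms(6) in \<open>auto simp: c_def n_def h_def\<close>)
    then show ?thesis unfolding e .
  next
    case 2
    define c where "c = w"
    define n where "n = 2*(m - w) + 1"
    define h where "h = m - w"
    have e: "(if n < 2*h then c+n else c) = w" by (simp add: c_def n_def h_def)
    have "pt k (\<lambda>p. p < (if n < 2*h then c+n else c)) \<in> OMaj k (Ham k S)"
      by (rule gadget_cyc) (use 2 lo mS in \<open>auto simp: c_def n_def h_def\<close>)
    then show ?thesis unfolding e .
  next
    case 3
    show ?thesis by (rule mix2[of m w s]) (use 3 mS assms in auto)
  next
    case 4
    show ?thesis by (rule mix1[of s w M]) (use 4 MS Mk assms in auto)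
  qed
qed

theorem claim4p7:
  fixes k :: nat and P :: "bool list set"
  assumes "k \<ge> 1" and "P \<subseteq> cube k"
  shows "(P \<subseteq> Ham k {0, k} \<longrightarrow> OMaj k P = P) \<and>
    (\<forall>S. S \<subseteq> {0..k} \<and> S - {0, k} \<noteq> {} \<and> P = Ham k S \<longrightarrow>
       OMaj k P = Ham k {w. w \<le> k \<and> 2 * int (Min S) - int k + 1 \<le> int w
                                   \<and> int w \<le> 2 * int (Max S) - 1})"
proof (intro conjI impI allI)
  assume "P \<subseteq> Ham k {0, k}"
  then show "OMaj k P = P" using part1 assms by blast
next
  fix S assume A: "S \<subseteq> {0..k} \<and> S - {0, k} \<noteq> {} \<and> P = Ham k S"
  then have Ssub: "S \<subseteq> {0..k}" and P: "P = Ham k S" by auto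
  have fin: "finite S" using Ssub finite_subset by blast
  obtain s where s: "s \<in> S" "0 < s" "s < k" using A Ssub by force
  define m where "m = Min S"
  define M where "M = Max S"
  have ne: "S \<noteq> {}" using s by auto
  have mS: "m \<in> S" unfolding m_def by (rule Min_in[OF fin ne])
  have MS: "M \<in> S" unfolding M_def by (rule Max_in[OF fin ne])
  have ms: "m \<le> s" and sM: "s \<le> M" using fin s by (auto simp: m_def M_def)
  have Hc: "Ham k S \<subseteq> cube k" by (auto simp: Ham_def)
  show "OMaj k P = Ham k {w. w \<le> k \<and> 2 * int (Min S) - int k + 1 \<le> int w \<and> int w \<le> 2 * int (Max S) - 1}"
  proof
    show "OMaj k P \<subseteq> Ham k {w. w \<le> k \<and> 2 * int (Min S) - int k + 1 \<le> int w \<and> int w \<le> 2 * int (Max S) - 1}"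
    proof
      fix x assume "x \<in> OMaj k P"
      then obtain L where L: "odd L" "x \<in> Ofun L Maj k (Ham k S)" by (auto simp: OMaj_def P)
      have xc: "x \<in> cube k" using L by (simp add: Ofun_def)
      have b1: "\<forall>y\<in>Ham k S. count_list y True \<le> M"
        using fin by (auto simp: Ham_def hweight_def M_def)
      have b2: "\<forall>y\<in>Ham k S. count_list y False \<le> k - m"
      proof
        fix y assume "y \<in> Ham k S"
        then have "length y = k" "count_list y True \<in> S" by (auto simp: Ham_def cube_def hweight_def)
        moreover then have "m \<le> count_list y True" using fin by (simp add: m_def)
        ultimately show "count_list y False \<le> k - m" using cf[of y] by linarith
      qed
      have h1: "count_list x True < 2 * M" using bound[OF L(2) L(1) b1 _ Hc] sM s by linarith
      have h2: "count_list x False < 2 * (k - m)" using bound[OF L(2) L(1) b2 _ Hc] ms s by linarith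
      have lx: "length x = k" using xc by (simp add: cube_def)
      have "count_list x False + count_list x True = k" using cf[of x] lx by simp
      moreover have "m \<le> k" using ms s by linarith
      ultimately have "int k + 2 * int m < 2 * int k + int (count_list x True)"
        using h2 by linarith
      then show "x \<in> Ham k {w. w \<le> k \<and> 2 * int (Min S) - int k + 1 \<le> int w \<and> int w \<le> 2 * int (Max S) - 1}"
        using h1 xc lx count_le_length[of x True]
        by (auto simp: Ham_def hweight_def m_def M_def)
    qed
    show "Ham k {w. w \<le> k \<and> 2 * int (Min S) - int k + 1 \<le> int w \<and> int w \<le> 2 * int (Max S) - 1} \<subseteq> OMaj k P"
    proof
      fix x assume "x \<in> Ham k {w. w \<le> k \<and> 2 * int (Min S) - int k + 1 \<le> int w \<and> int w \<le> 2 * int (Max S) - 1}"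
      then have xc: "x \<in> cube k" and w: "hweight x \<le> k" "2 * int (Min S) - int k + 1 \<le> int (hweight x)"
        "int (hweight x) \<le> 2 * int (Max S) - 1" by (auto simp: Ham_def)
      have z: "pt k (\<lambda>p. p < hweight x) \<in> OMaj k (Ham k S)"
        by (rule pt_pre_OMaj[OF Ssub fin s w])
      have "{i. i < k \<and> i < hweight x} = {..<hweight x}" using w(1) by auto
      then have "hweight x = hweight (pt k (\<lambda>p. p < hweight x))" by (simp add: hweight_pt)
      from perm_closed[OF z xc this] show "x \<in> OMaj k P" by (simp add: P)
    qed
  qed
qed

end
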